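(* Let $n\ge3$ and $\alpha\in[0,1]$. Then \[ \rho(A_\alpha(P_n))\le\begin{cases}2\alpha+2(1-\alpha)\cos\left(\frac{\pi}{n+1}\right), & 0\le\alpha<1/2,\\[2pt] 2\alpha+2(1-\alpha)\cos\left(\frac{\pi}{n}\right), & 1/2\le\alpha\le1.\end{cases} \] Equality holds if and only if $\alpha\in\{0,1/2,1\}$.
   Context: $P_n$ is the path on $n$ vertices. For a graph $G$, $A(G)$ is the adjacency matrix, $D(G)$ the diagonal degree matrix, and $A_\alpha(G)=\alpha D(G)+(1-\alpha)A(G)$; $\rho(M)$ is the largest eigenvalue of a real symmetric matrix $M$. *)

theory Defs
  imports "Jordan_Normal_Form.Char_Poly"
begin

definition path_adj :: "nat \<Rightarrow> real mat" where
  "path_adj n = mat n n (\<lambda>(i, j). if i + 1 = j \<or> j + 1 = i then 1 else 0)"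

definition path_deg :: "nat \<Rightarrow> real mat" where
  "path_deg n = mat n n (\<lambda>(i, j). if i = j then (\<Sum>k<n. path_adj n $$ (i, k)) else 0)"

definition A_alpha :: "real \<Rightarrow> nat \<Rightarrow> real mat" where
  "A_alpha \<alpha> n = \<alpha> \<cdot>\<^sub>m path_deg n + (1 - \<alpha>) \<cdot>\<^sub>m path_adj n"

definition rho :: "real mat \<Rightarrow> real" where
  "rho M = Max {k. eigenvalue M k}"

end

theory Submission
  imports Defs
begin

definition nb :: "nat \<Rightarrow> (nat \<Rightarrow> real) \<Rightarrow> nat \<Rightarrow> real" where
  "nb n g i = (if 0<i then g(i-1) else 0) + (if Suc i<n then g(Suc i) else 0)"

lemma adj_sum: assumes "i < n"
  shows "(\<Sum>j<n. (if i + 1 = j \<or> j + 1 = i then 1 else 0) * g j) = nb n g i"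
proof -
  have "(\<Sum>j<n. (if i + 1 = j \<or> j + 1 = i then 1 else 0) * g j)
     = (\<Sum>j<n. (if j = Suc i then g j else 0)) + (\<Sum>j<n. (if j = i - 1 \<and> 0 < i then g j else 0))"
    by (subst sum.distrib[symmetric], rule sum.cong, auto)
  also have "\<dots> = nb n g i" unfolding nb_def using assms
    by (auto simp: sum.delta' sum.If_cases)
  finally show ?thesis .
qed

definition dg :: "nat \<Rightarrow> nat \<Rightarrow> real" where "dg n i = nb n (\<lambda>_. 1) i"

lemma M_carrier: "A_alpha \<alpha> n \<in> carrier_mat n n"
  unfolding A_alpha_def path_deg_def path_adj_def by auto

lemma M_entry: assumes "i < n" "j < n"
  shows "A_alpha \<alpha> n $$ (i,j) = (if i = j then \<alpha> * dg n i else 0) + (1-\<alpha>) * (if i + 1 = j \<or> j + 1 = i then 1 else 0)"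
proof -
  have "(\<Sum>k<n. path_adj n $$ (i, k)) = (\<Sum>k<n. (if i + 1 = k \<or> k + 1 = i then 1 else 0) * (\<lambda>_. 1::real) k)"
    by (rule sum.cong) (auto simp: path_adj_def assms)
  also have "\<dots> = dg n i"
    using adj_sum[OF assms(1), of "\<lambda>_. 1"] unfolding dg_def by simp
  finally have "(\<Sum>k<n. path_adj n $$ (i, k)) = dg n i" .
  then show ?thesis using assms unfolding A_alpha_def path_deg_def path_adj_def
    by (auto simp: lessThan_atLeast0)
qed

lemma M_row: assumes "i < n" "v \<in> carrier_vec n"
  shows "(A_alpha \<alpha> n *\<^sub>v v) $ i = \<alpha> * dg n i * v $ i + (1-\<alpha>) * nb n (\<lambda>j. v $ j) i"
proof -
  have "(A_alpha \<alpha> n *\<^sub>v v) $ i = (\<Sum>j<n. A_alpha \<alpha> n $$ (i,j) * v $ j)"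
    using assms M_carrier[of \<alpha> n] by (auto simp: scalar_prod_def lessThan_atLeast0)
  also have "\<dots> = (\<Sum>j<n. (if j = i then \<alpha> * dg n i * v $ j else 0)
      + (1-\<alpha>) * ((if i + 1 = j \<or> j + 1 = i then 1 else 0) * v $ j))"
    by (rule sum.cong, auto simp: M_entry assms algebra_simps)
  also have "\<dots> = \<alpha> * dg n i * v $ i + (1-\<alpha>) * nb n (\<lambda>j. v $ j) i"
    using assms adj_sum[OF assms(1), of "\<lambda>j. v $ j"] by (simp add: sum.distrib sum_distrib_left[symmetric])
  finally show ?thesis .
qed

lemma nb_sum: "(\<Sum>i<n. nb n g i * h i) = (\<Sum>i<n-1. g i * h (Suc i) + g (Suc i) * h i)"
proof (cases n)
  case 0 then show ?thesis by simp
next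
  case (Suc m)
  have "(\<Sum>i<n. nb n g i * h i) = (\<Sum>i<Suc m. (if 0<i then g(i-1) * h i else 0)) + (\<Sum>i<Suc m. (if Suc i < Suc m then g (Suc i) * h i else 0))"
    unfolding nb_def Suc sum.distrib[symmetric] by (rule sum.cong) (auto simp: algebra_simps)
  also have "(\<Sum>i<Suc m. (if 0<i then g(i-1) * h i else 0)) = (\<Sum>i<m. g i * h (Suc i))"
    by (subst sum.lessThan_Suc_shift) simp
  also have "(\<Sum>i<Suc m. (if Suc i < Suc m then g (Suc i) * h i else 0)) = (\<Sum>i<m. g (Suc i) * h i)"
    by (simp add: sum.lessThan_Suc)
  finally show ?thesis using Suc by (simp add: sum.distrib)
qed

definition E :: "nat \<Rightarrow> (nat \<Rightarrow> real) \<Rightarrow> real" where "E n f = (\<Sum>i<n-1. f i * f (Suc i))"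

lemma nb_self: "(\<Sum>i<n. f i * nb n f i) = 2 * E n f"
proof -
  have "(\<Sum>i<n. f i * nb n f i) = (\<Sum>i<n. nb n f i * f i)" by (simp add: mult.commute)
  also have "\<dots> = (\<Sum>i<n-1. 2 * (f i * f (Suc i)))" unfolding nb_sum by (simp add: mult.commute)
  finally show ?thesis unfolding E_def by (simp add: sum_distrib_left)
qed

lemma W_eq: assumes pos: "\<And>i. i < n \<Longrightarrow> y i > 0"
  shows "(\<Sum>i<n. nb n y i / y i * f i ^ 2) - 2 * E n f
     = (\<Sum>i<n-1. (y (Suc i) * f i - y i * f (Suc i))^2 / (y i * y (Suc i)))"
proof -
  have "(\<Sum>i<n. nb n y i / y i * f i ^ 2) = (\<Sum>i<n. nb n y i * (f i ^ 2 / y i))"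
    by simp
  also have "\<dots> = (\<Sum>i<n-1. y i * (f (Suc i) ^ 2 / y (Suc i)) + y (Suc i) * (f i ^2 / y i))"
    by (rule nb_sum)
  finally have 1: "(\<Sum>i<n. nb n y i / y i * f i ^ 2) = \<dots>" .
  have 2: "(y (Suc i) * f i - y i * f (Suc i))^2 / (y i * y (Suc i)) =
      y i * (f (Suc i) ^ 2 / y (Suc i)) + y (Suc i) * (f i ^2 / y i) - 2 * (f i * f (Suc i))" if "i < n - 1" for i
  proof -
    have a: "y i > 0" "y (Suc i) > 0" using pos that by auto
    then show ?thesis by (simp add: field_simps power2_eq_square)
  qed
  show ?thesis unfolding 1 E_def
    by (simp add: 2 sum_subtractf sum_distrib_left)
qed

lemma W_le: assumes pos: "\<And>i. i < n \<Longrightarrow> y i > 0"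
  shows "2 * E n f \<le> (\<Sum>i<n. nb n y i / y i * f i ^ 2)"
proof -
  have "0 \<le> (\<Sum>i<n-1. (y (Suc i) * f i - y i * f (Suc i))^2 / (y i * y (Suc i)))"
    by (rule sum_nonneg) (use pos in \<open>auto intro!: divide_nonneg_pos\<close>)
  then show ?thesis using W_eq[where y=y and n=n and f=f, OF pos] by linarith
qed

lemma W_eq0: assumes pos: "\<And>i. i < n \<Longrightarrow> y i > 0"
  and eq: "2 * E n f = (\<Sum>i<n. nb n y i / y i * f i ^ 2)"
  and i: "i < n - 1"
  shows "y (Suc i) * f i = y i * f (Suc i)"
proof -
  have z: "(\<Sum>i<n-1. (y (Suc i) * f i - y i * f (Suc i))^2 / (y i * y (Suc i))) = 0"
    using W_eq[where y=y and n=n and f=f, OF pos] eq by linarith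
  have "\<forall>j\<in>{..<n-1}. (y (Suc j) * f j - y j * f (Suc j))^2 / (y j * y (Suc j)) = 0"
    by (rule sum_nonneg_eq_0_iff[THEN iffD1, OF _ _ z]) (use pos in \<open>auto intro!: divide_nonneg_pos\<close>)
  then have "(y (Suc i) * f i - y i * f (Suc i))^2 / (y i * y (Suc i)) = 0" using i by auto
  moreover have "y i > 0" "y (Suc i) > 0" using pos i by auto
  ultimately show ?thesis by simp
qed

lemma sin_sum2: "sin (x - t) + sin (x + t) = 2 * cos t * sin (x::real)"
  by (simp add: sin_add sin_diff)

lemma h1: "0 < i \<Longrightarrow> real (Suc (i - 1)) * t = real (Suc i) * t - (t::real)"
  by (simp add: of_nat_diff algebra_simps)
lemma h2: "real (Suc (Suc i)) * t = real (Suc i) * t + (t::real)"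
  by (simp add: algebra_simps)
lemma h3: "0 < i \<Longrightarrow> real (2*(i-1)+1) * t = real (2*i+1) * t - 2*(t::real)"
  by (simp add: of_nat_diff algebra_simps)
lemma h4: "real (2*(Suc i)+1) * t = real (2*i+1) * t + 2*(t::real)"
  by (simp add: algebra_simps)

definition yA :: "nat \<Rightarrow> nat \<Rightarrow> real" where "yA n i = sin (real (Suc i) * (pi / real (Suc n)))"
definition yB :: "nat \<Rightarrow> nat \<Rightarrow> real" where "yB n i = sin (real (2*i+1) * (pi / real (2*n)))"

lemma ratio_pi: assumes "0 < a" "a < (b::real)" shows "0 < a * (pi / b)" "a * (pi / b) < pi"
proof -
  show "0 < a * (pi / b)" using assms by simp
  have "a * (pi / b) = pi * (a / b)" by simp
  also have "\<dots> < pi * 1" using assms by (intro mult_strict_left_mono) auto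
  finally show "a * (pi / b) < pi" by simp
qed

lemma yA_pos: "i < n \<Longrightarrow> yA n i > 0"
  unfolding yA_def by (rule sin_gt_zero) (rule ratio_pi; simp)+

lemma yB_pos: "i < n \<Longrightarrow> yB n i > 0"
  unfolding yB_def by (rule sin_gt_zero) (rule ratio_pi; simp)+

lemma yA_nb: assumes "i < n" shows "nb n (yA n) i = 2 * cos (pi / real (Suc n)) * yA n i"
proof -
  let ?t = "pi / real (Suc n)"
  have key: "sin (real (Suc i) * ?t - ?t) + sin (real (Suc i) * ?t + ?t) = 2 * cos ?t * yA n i"
    unfolding yA_def by (rule sin_sum2)
  have l: "(if 0<i then yA n (i-1) else 0) = sin (real (Suc i) * ?t - ?t)"
  proof (cases "i = 0")
    case True then show ?thesis by simp
  next
    case False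
    then have "yA n (i-1) = sin (real (Suc i) * ?t - ?t)" unfolding yA_def by (subst h1) auto
    then show ?thesis using False by simp
  qed
  have r: "(if Suc i < n then yA n (Suc i) else 0) = sin (real (Suc i) * ?t + ?t)"
  proof (cases "Suc i < n")
    case True
    have "yA n (Suc i) = sin (real (Suc i) * ?t + ?t)" unfolding yA_def by (subst h2) auto
    then show ?thesis using True by simp
  next
    case False then have "Suc i = n" using assms by simp
    then have "real (Suc i) * ?t + ?t = real (Suc n) * ?t" using h2[of i ?t] by simp
    also have "\<dots> = pi" by simp
    finally have "real (Suc i) * ?t + ?t = pi" .
    then show ?thesis using False by simp
  qed
  show ?thesis unfolding nb_def l r key ..
qed

lemma dg_eq: assumes "i < n" "2 \<le> n" shows "dg n i = (if i = 0 \<or> Suc i = n then 1 else 2)"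
  using assms unfolding dg_def nb_def by auto

lemma yB_nb: assumes "i < n" "2 \<le> n" shows "nb n (yB n) i = (2 + 2 * cos (pi / real n) - dg n i) * yB n i"
proof -
  let ?t = "pi / real (2*n)"
  have t2: "2 * ?t = pi / real n" by simp
  have key: "sin (real (2*i+1) * ?t - 2*?t) + sin (real (2*i+1) * ?t + 2*?t) = 2 * cos (pi / real n) * yB n i"
    unfolding yB_def t2[symmetric] by (rule sin_sum2)
  have l: "(if 0<i then yB n (i-1) else 0) = sin (real (2*i+1) * ?t - 2*?t) + (if i = 0 then yB n i else 0)"
  proof (cases "i = 0")
    case True then show ?thesis unfolding yB_def by simp
  next
    case False
    then have "yB n (i-1) = sin (real (2*i+1) * ?t - 2*?t)" unfolding yB_def by (subst h3) auto
    then show ?thesis using False by simp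
  qed
  have r: "(if Suc i < n then yB n (Suc i) else 0) = sin (real (2*i+1) * ?t + 2*?t) + (if Suc i = n then yB n i else 0)"
  proof (cases "Suc i < n")
    case True
    have "yB n (Suc i) = sin (real (2*i+1) * ?t + 2*?t)" unfolding yB_def by (subst h4) auto
    then show ?thesis using True by simp
  next
    case False then have n: "n = Suc i" using assms by simp
    have n0: "real n > 0" using assms by simp
    have pn: "real (2*n) * ?t = pi" using n0 by simp
    have e0: "real (2*i+1) = real (2*n) - 1" unfolding n by simp
    have "real (2*i+1) * ?t = real (2*n) * ?t - ?t" unfolding e0 by (simp only: left_diff_distrib mult_1)
    then have e2: "real (2*i+1) * ?t = pi - ?t" unfolding pn .
    have e1: "real (2*i+1) * ?t + 2*?t = pi + ?t" unfolding e2 by simp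
    have yy: "yB n i = sin (pi - ?t)" unfolding yB_def e2 ..
    have "sin (pi + ?t) = - sin ?t" by (simp add: sin_add)
    then show ?thesis using False n yy unfolding e1 by simp
  qed
  have "nb n (yB n) i = 2 * cos (pi / real n) * yB n i + (if i = 0 then yB n i else 0) + (if Suc i = n then yB n i else 0)"
    unfolding nb_def l r key[symmetric] by simp
  also have "\<dots> = (2 + 2 * cos (pi / real n) - dg n i) * yB n i"
    using assms by (auto simp: dg_eq algebra_simps)
  finally show ?thesis .
qed

definition bnd :: "real \<Rightarrow> nat \<Rightarrow> real" where
  "bnd \<alpha> n = (if \<alpha> < 1/2 then 2*\<alpha> + 2*(1-\<alpha>)*cos (pi / real (n+1))
            else 2*\<alpha> + 2*(1-\<alpha>)*cos (pi / real n))"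

lemma ev_bound_fun:
  fixes f :: "nat \<Rightarrow> real"
  assumes n: "3 \<le> n" and a: "0 \<le> \<alpha>" "\<alpha> \<le> 1"
    and ev: "\<And>i. i < n \<Longrightarrow> k * f i = \<alpha> * dg n i * f i + (1-\<alpha>) * nb n f i"
    and nz: "i0 < n" "f i0 \<noteq> 0"
  shows "k \<le> bnd \<alpha> n \<and> (\<alpha> \<notin> {0, 1/2, 1} \<longrightarrow> k < bnd \<alpha> n)"
proof -
  define N where "N = (\<Sum>i<n. f i ^ 2)"
  define D where "D = (\<Sum>i<n. dg n i * f i ^ 2)"
  define cA where "cA = cos (pi / real (Suc n))"
  define cB where "cB = cos (pi / real n)"
  have N0: "N > 0" unfolding N_def
  proof -
    have "f i0 ^ 2 \<le> (\<Sum>i<n. f i ^ 2)"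
      by (rule member_le_sum) (use nz in auto)
    moreover have "f i0 ^ 2 > 0" using nz by simp
    ultimately show "0 < (\<Sum>i<n. f i ^ 2)" by linarith
  qed
  have S1: "k * N = \<alpha> * D + (1-\<alpha>) * (2 * E n f)"
  proof -
    have "k * N = (\<Sum>i<n. f i * (k * f i))" unfolding N_def
      by (simp add: sum_distrib_left power2_eq_square algebra_simps)
    also have "\<dots> = (\<Sum>i<n. \<alpha> * (dg n i * f i ^ 2) + (1-\<alpha>) * (f i * nb n f i))"
      by (rule sum.cong) (auto simp: ev power2_eq_square algebra_simps)
    also have "\<dots> = \<alpha> * D + (1-\<alpha>) * (2 * E n f)"
      unfolding D_def nb_self[symmetric] by (simp add: sum.distrib sum_distrib_left)
    finally show ?thesis .
  qed
  have A: "2 * E n f \<le> 2 * cA * N"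
  proof -
    have "2 * E n f \<le> (\<Sum>i<n. nb n (yA n) i / yA n i * f i ^ 2)"
      by (rule W_le) (rule yA_pos)
    also have "\<dots> = (\<Sum>i<n. 2 * cA * f i ^ 2)"
      by (rule sum.cong) (auto simp: yA_nb cA_def dest: yA_pos[of _ n])
    finally show ?thesis unfolding N_def by (simp add: sum_distrib_left)
  qed
  have Bq: "(\<Sum>i<n. nb n (yB n) i / yB n i * f i ^ 2) = (2 + 2*cB) * N - D"
  proof -
    have "(\<Sum>i<n. nb n (yB n) i / yB n i * f i ^ 2) = (\<Sum>i<n. (2 + 2*cB) * f i ^ 2 - dg n i * f i ^ 2)"
    proof (rule sum.cong)
      fix i assume "i \<in> {..<n}"
      then have i: "i < n" by simp
      have "yB n i > 0" using yB_pos[OF i] .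
      then have "nb n (yB n) i / yB n i = 2 + 2*cB - dg n i"
        using yB_nb[OF i] n unfolding cB_def by simp
      then show "nb n (yB n) i / yB n i * f i ^ 2 = (2 + 2*cB) * f i ^ 2 - dg n i * f i ^ 2"
        by (simp only: left_diff_distrib)
    qed simp
    then show ?thesis unfolding N_def D_def by (simp add: sum_subtractf sum_distrib_left)
  qed
  have B: "2 * E n f \<le> (2 + 2*cB) * N - D"
    using W_le[of n "yB n" f] yB_pos Bq by auto
  have dg12: "\<And>i. i < n \<Longrightarrow> 1 \<le> dg n i \<and> dg n i \<le> 2"
    using n by (auto simp: dg_eq)
  have D2: "D \<le> 2 * N" unfolding D_def N_def sum_distrib_left
    by (rule sum_mono) (use dg12 in \<open>auto intro!: mult_right_mono\<close>)
  have cAB: "cB < cA" unfolding cA_def cB_def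
    by (rule cos_monotone_0_pi) (use n in \<open>auto simp: field_simps\<close>)
  show ?thesis
  proof (cases "\<alpha> < 1/2")
    case True
    have kN: "k * N = \<alpha> * (D + 2 * E n f) + (1 - 2*\<alpha>) * (2 * E n f)"
      unfolding S1 by (simp add: algebra_simps)
    have "\<alpha> * (D + 2 * E n f) \<le> \<alpha> * ((2 + 2*cB) * N)"
      using B a by (intro mult_left_mono) auto
    moreover have "(1 - 2*\<alpha>) * (2 * E n f) \<le> (1 - 2*\<alpha>) * (2 * cA * N)"
      using A True by (intro mult_left_mono) auto
    ultimately have "k * N \<le> \<alpha> * ((2 + 2*cB) * N) + (1 - 2*\<alpha>) * (2 * cA * N)"
      unfolding kN by linarith
    also have "\<dots> = bnd \<alpha> n * N - 2 * \<alpha> * (cA - cB) * N"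
      using True unfolding bnd_def cA_def cB_def by (simp add: algebra_simps)
    finally have kN2: "k * N \<le> bnd \<alpha> n * N - 2 * \<alpha> * (cA - cB) * N" .
    have "0 \<le> 2 * \<alpha> * (cA - cB) * N" using a cAB N0 by simp
    then have le: "k * N \<le> bnd \<alpha> n * N" using kN2 by linarith
    have lt: "k * N < bnd \<alpha> n * N" if "\<alpha> \<noteq> 0"
    proof -
      have "0 < 2 * \<alpha> * (cA - cB) * N" using a that cAB N0 by simp
      then show ?thesis using kN2 by linarith
    qed
    show ?thesis using le lt N0 by auto
  next
    case False
    have kN: "k * N = (2*\<alpha> - 1) * D + (1 - \<alpha>) * (D + 2 * E n f)"
      unfolding S1 by (simp add: algebra_simps)
    have bn: "bnd \<alpha> n * N = (2*\<alpha> - 1) * (2 * N) + (1 - \<alpha>) * ((2 + 2*cB) * N)"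
      using False unfolding bnd_def cB_def by (simp add: algebra_simps)
    have t1: "(2*\<alpha> - 1) * D \<le> (2*\<alpha> - 1) * (2 * N)"
      using D2 False by (intro mult_left_mono) auto
    have t2: "(1 - \<alpha>) * (D + 2 * E n f) \<le> (1 - \<alpha>) * ((2 + 2*cB) * N)"
      using B a by (intro mult_left_mono) auto
    have le: "k * N \<le> bnd \<alpha> n * N" using t1 t2 kN bn by linarith
    have lt: "k * N < bnd \<alpha> n * N" if "\<alpha> \<noteq> 1/2" "\<alpha> \<noteq> 1"
    proof (rule ccontr)
      assume "\<not> ?thesis"
      then have eq: "k * N = bnd \<alpha> n * N" using le by linarith
      have p1: "2*\<alpha> - 1 > 0" "1 - \<alpha> > 0" using False that a by auto
      have "(2*\<alpha> - 1) * D = (2*\<alpha> - 1) * (2 * N)" using t1 t2 eq kN bn by linarith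
      then have DN: "D = 2 * N" using p1 by simp
      have "(1 - \<alpha>) * (D + 2 * E n f) = (1 - \<alpha>) * ((2 + 2*cB) * N)" using t1 t2 eq kN bn by linarith
      then have EE: "2 * E n f = (\<Sum>i<n. nb n (yB n) i / yB n i * f i ^ 2)" using p1 Bq by simp
      have f0: "f 0 = 0"
      proof -
        have "2 * N - D = (\<Sum>i<n. (2 - dg n i) * f i ^ 2)" unfolding N_def D_def
          by (simp add: sum_subtractf sum_distrib_left algebra_simps)
        also have "\<dots> = (2 - dg n 0) * f 0 ^ 2 + (\<Sum>i\<in>{..<n} - {0}. (2 - dg n i) * f i ^ 2)"
          by (rule sum.remove) (use n in auto)
        finally have "f 0 ^ 2 + (\<Sum>i\<in>{..<n} - {0}. (2 - dg n i) * f i ^ 2) = 0"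
          using DN n by (simp add: dg_eq)
        moreover have "0 \<le> (\<Sum>i\<in>{..<n} - {0}. (2 - dg n i) * f i ^ 2)"
          by (rule sum_nonneg) (use dg12 in auto)
        ultimately show ?thesis by (smt (verit) zero_le_power2 power_eq_0_iff)
      qed
      have "\<forall>i<n. f i = 0"
      proof (intro allI impI)
        fix i assume "i < n"
        then show "f i = 0"
        proof (induction i)
          case 0 then show ?case using f0 by simp
        next
          case (Suc i)
          have "yB n (Suc i) * f i = yB n i * f (Suc i)"
            by (rule W_eq0[OF _ EE]) (use Suc yB_pos in auto)
          moreover have "yB n i > 0" using Suc yB_pos by auto
          ultimately show ?case using Suc by simp
        qed
      qed
      then show False using nz by auto
    qed
    show ?thesis using le lt N0 by auto
  qed
qed

lemma sym_real_eigenvalue_exists: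
  fixes M :: "real mat"
  assumes M: "M \<in> carrier_mat n n" and n: "0 < n"
    and sym: "\<And>i j. i < n \<Longrightarrow> j < n \<Longrightarrow> M $$ (i,j) = M $$ (j,i)"
  shows "\<exists>r. eigenvalue M r"
proof -
  define Mc where "Mc = map_mat complex_of_real M"
  have Mc: "Mc \<in> carrier_mat n n" using M unfolding Mc_def by simp
  have cp: "char_poly Mc = map_poly of_real (char_poly M)"
    unfolding Mc_def by (rule of_real_hom.char_poly_hom[OF M])
  have "degree (char_poly Mc) = n" using degree_monic_char_poly[OF Mc] by simp
  then have "\<not> constant (poly (char_poly Mc))" using n by (simp add: constant_degree)
  then obtain z where z: "poly (char_poly Mc) z = 0" using fundamental_theorem_of_algebra by blast
  then have "eigenvalue Mc z" using eigenvalue_root_char_poly[OF Mc] by simp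
  then obtain w where w: "eigenvector Mc w z" unfolding eigenvalue_def by blast
  then have wc: "w \<in> carrier_vec n" and wnz: "w \<noteq> 0\<^sub>v n" and wev: "Mc *\<^sub>v w = z \<cdot>\<^sub>v w"
    unfolding eigenvector_def using Mc by auto
  define x where "x j = Re (w $ j)" for j
  define y where "y j = Im (w $ j)" for j
  define p where "p = Re z"
  define q where "q = Im z"
  have row: "(\<Sum>j<n. complex_of_real (M $$ (i,j)) * w $ j) = z * w $ i" if i: "i < n" for i
  proof -
    have "(Mc *\<^sub>v w) $ i = z * w $ i" using wev wc i by simp
    moreover have "(Mc *\<^sub>v w) $ i = (\<Sum>j<n. complex_of_real (M $$ (i,j)) * w $ j)"
      using Mc wc i M unfolding Mc_def by (auto simp: scalar_prod_def lessThan_atLeast0 intro!: sum.cong)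
    ultimately show ?thesis by simp
  qed
  have rx: "(\<Sum>j<n. M $$ (i,j) * x j) = p * x i - q * y i" if i: "i < n" for i
  proof -
    have "Re (\<Sum>j<n. complex_of_real (M $$ (i,j)) * w $ j) = Re (z * w $ i)" using row[OF i] by simp
    then show ?thesis unfolding x_def y_def p_def q_def by (simp add: Re_sum)
  qed
  have ry: "(\<Sum>j<n. M $$ (i,j) * y j) = p * y i + q * x i" if i: "i < n" for i
  proof -
    have "Im (\<Sum>j<n. complex_of_real (M $$ (i,j)) * w $ j) = Im (z * w $ i)" using row[OF i] by simp
    then show ?thesis unfolding x_def y_def p_def q_def by (simp add: Im_sum algebra_simps)
  qed
  have swap: "(\<Sum>i<n. y i * (\<Sum>j<n. M $$ (i,j) * x j)) = (\<Sum>i<n. x i * (\<Sum>j<n. M $$ (i,j) * y j))"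
  proof -
    have "(\<Sum>i<n. y i * (\<Sum>j<n. M $$ (i,j) * x j)) = (\<Sum>i<n. \<Sum>j<n. y i * M $$ (i,j) * x j)"
      by (simp add: sum_distrib_left algebra_simps)
    also have "\<dots> = (\<Sum>j<n. \<Sum>i<n. y i * M $$ (i,j) * x j)" by (rule sum.swap)
    also have "\<dots> = (\<Sum>j<n. x j * (\<Sum>i<n. M $$ (j,i) * y i))"
      by (simp add: sum_distrib_left algebra_simps sym)
    finally show ?thesis .
  qed
  have "(\<Sum>i<n. y i * (p * x i - q * y i)) = (\<Sum>i<n. x i * (p * y i + q * x i))"
    using swap by (simp add: rx ry)
  then have "q * (\<Sum>i<n. x i ^ 2 + y i ^ 2) = 0"
    by (simp add: sum_distrib_left sum_subtractf sum.distrib algebra_simps power2_eq_square)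
  moreover have "(\<Sum>i<n. x i ^ 2 + y i ^ 2) > 0"
  proof -
    obtain i where i: "i < n" "w $ i \<noteq> 0" using wnz wc by (metis eq_vecI carrier_vecD index_zero_vec(1,2))
    then have "x i ^ 2 + y i ^ 2 > 0" unfolding x_def y_def
      using complex_neq_0 by blast
    moreover have "x i ^ 2 + y i ^ 2 \<le> (\<Sum>i<n. x i ^ 2 + y i ^ 2)"
      by (rule member_le_sum[where f = "\<lambda>i. x i ^ 2 + y i ^ 2"]) (use i in auto)
    ultimately show ?thesis by linarith
  qed
  ultimately have q0: "q = 0" by simp
  then have "z = complex_of_real p" unfolding p_def q_def by (simp add: complex_eq_iff)
  then have "complex_of_real (poly (char_poly M) p) = 0" using z cp by simp
  then have "poly (char_poly M) p = 0" by simp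
  then show ?thesis using eigenvalue_root_char_poly[OF M] by blast
qed

lemma M_sym: "i < n \<Longrightarrow> j < n \<Longrightarrow> A_alpha \<alpha> n $$ (i,j) = A_alpha \<alpha> n $$ (j,i)"
  by (auto simp: M_entry)

lemma ev_le:
  assumes n: "3 \<le> n" and a: "0 \<le> \<alpha>" "\<alpha> \<le> 1" and ev: "eigenvalue (A_alpha \<alpha> n) k"
  shows "k \<le> bnd \<alpha> n \<and> (\<alpha> \<notin> {0, 1/2, 1} \<longrightarrow> k < bnd \<alpha> n)"
proof -
  obtain v where "eigenvector (A_alpha \<alpha> n) v k" using ev unfolding eigenvalue_def by blast
  then have vc: "v \<in> carrier_vec n" and vnz: "v \<noteq> 0\<^sub>v n" and vev: "A_alpha \<alpha> n *\<^sub>v v = k \<cdot>\<^sub>v v"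
    unfolding eigenvector_def using M_carrier[of \<alpha> n] by auto
  obtain i0 where i0: "i0 < n" "v $ i0 \<noteq> 0" using vnz vc by (metis eq_vecI carrier_vecD index_zero_vec(1,2))
  show ?thesis
  proof (rule ev_bound_fun[OF n a, of k "\<lambda>i. v $ i" i0])
    fix i assume i: "i < n"
    have "(A_alpha \<alpha> n *\<^sub>v v) $ i = k * v $ i" using vev vc i by simp
    then show "k * v $ i = \<alpha> * dg n i * v $ i + (1 - \<alpha>) * nb n (($) v) i"
      using M_row[OF i vc] by simp
  qed (use i0 in auto)
qed

lemma nb_vec: "i < n \<Longrightarrow> nb n (\<lambda>j. vec n g $ j) i = nb n g i"
  unfolding nb_def by auto

lemma ev_explicit:
  assumes n: "3 \<le> n" and g: "\<And>i. i < n \<Longrightarrow> \<alpha> * dg n i * g i + (1-\<alpha>) * nb n g i = k * g i"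
    and nz: "i0 < n" "g i0 \<noteq> 0"
  shows "eigenvalue (A_alpha \<alpha> n) k"
proof -
  let ?v = "vec n g"
  have "eigenvector (A_alpha \<alpha> n) ?v k"
    unfolding eigenvector_def
  proof (intro conjI)
    show "?v \<in> carrier_vec (dim_row (A_alpha \<alpha> n))" using M_carrier[of \<alpha> n] by simp
    show "?v \<noteq> 0\<^sub>v (dim_row (A_alpha \<alpha> n))"
    proof
      assume "?v = 0\<^sub>v (dim_row (A_alpha \<alpha> n))"
      then have "?v $ i0 = 0" using nz M_carrier[of \<alpha> n] by simp
      then show False using nz by simp
    qed
    show "A_alpha \<alpha> n *\<^sub>v ?v = k \<cdot>\<^sub>v ?v"
    proof (rule eq_vecI)
      fix i assume "i < dim_vec (k \<cdot>\<^sub>v ?v)"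
      then have i: "i < n" by simp
      show "(A_alpha \<alpha> n *\<^sub>v ?v) $ i = (k \<cdot>\<^sub>v ?v) $ i"
        using M_row[OF i, of ?v \<alpha>] nb_vec[OF i, of g] g[OF i] i by simp
    qed (use M_carrier[of \<alpha> n] in simp)
  qed
  then show ?thesis unfolding eigenvalue_def by blast
qed

lemma ev_eq_cases:
  assumes n: "3 \<le> n" and a: "\<alpha> \<in> {0, 1/2, 1}"
  shows "eigenvalue (A_alpha \<alpha> n) (bnd \<alpha> n)"
proof -
  consider "\<alpha> = 0" | "\<alpha> = 1/2" | "\<alpha> = 1" using a by auto
  then show ?thesis
  proof cases
    case 1
    show ?thesis
    proof (rule ev_explicit[OF n, of _ "yA n" _ 0])
      fix i assume i: "i < n"
      show "\<alpha> * dg n i * yA n i + (1 - \<alpha>) * nb n (yA n) i = bnd \<alpha> n * yA n i"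
        using 1 yA_nb[OF i] unfolding bnd_def by simp
    qed (use n yA_pos[of 0 n] in auto)
  next
    case 2
    show ?thesis
    proof (rule ev_explicit[OF n, of _ "yB n" _ 0])
      fix i assume i: "i < n"
      show "\<alpha> * dg n i * yB n i + (1 - \<alpha>) * nb n (yB n) i = bnd \<alpha> n * yB n i"
      proof -
        have h: "nb n (yB n) i = 2*yB n i + 2*cos (pi / real n)*yB n i - dg n i * yB n i"
          using yB_nb[OF i] n by (simp add: algebra_simps)
        show ?thesis unfolding 2 bnd_def h by (simp add: algebra_simps)
      qed
    qed (use n yB_pos[of 0 n] in auto)
  next
    case 3
    show ?thesis
    proof (rule ev_explicit[OF n, of _ "\<lambda>i. if i = 1 then 1 else 0" _ 1])
      fix i assume i: "i < n"
      show "\<alpha> * dg n i * (if i = 1 then 1 else 0) + (1 - \<alpha>) * nb n (\<lambda>i. if i = 1 then 1 else 0) i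
          = bnd \<alpha> n * (if i = 1 then 1 else 0)"
        using 3 n i unfolding bnd_def by (simp add: dg_eq)
    qed (use n in auto)
  qed
qed

lemma ev_finite: "finite {k. eigenvalue (A_alpha \<alpha> n) k}"
proof -
  have "char_poly (A_alpha \<alpha> n) \<noteq> 0"
    using degree_monic_char_poly[OF M_carrier[of \<alpha> n]] by auto
  then have "finite {k. poly (char_poly (A_alpha \<alpha> n)) k = 0}" by (rule poly_roots_finite)
  then show ?thesis using eigenvalue_root_char_poly[OF M_carrier[of \<alpha> n]] by simp
qed

theorem corollary12:
  fixes n :: nat and \<alpha> :: real
  assumes "n \<ge> 3" and "0 \<le> \<alpha>" and "\<alpha> \<le> 1"
  shows "rho (A_alpha \<alpha> n) \<le>
           (if \<alpha> < 1/2 then 2*\<alpha> + 2*(1-\<alpha>)*cos (pi / real (n+1))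
            else 2*\<alpha> + 2*(1-\<alpha>)*cos (pi / real n))
     \<and> (rho (A_alpha \<alpha> n) =
           (if \<alpha> < 1/2 then 2*\<alpha> + 2*(1-\<alpha>)*cos (pi / real (n+1))
            else 2*\<alpha> + 2*(1-\<alpha>)*cos (pi / real n))
        \<longleftrightarrow> \<alpha> \<in> {0, 1/2, 1})"
proof -
  let ?S = "{k. eigenvalue (A_alpha \<alpha> n) k}"
  have fin: "finite ?S" by (rule ev_finite)
  have ne: "?S \<noteq> {}"
    using sym_real_eigenvalue_exists[OF M_carrier, of n \<alpha>] M_sym assms(1) by auto
  have mem: "rho (A_alpha \<alpha> n) \<in> ?S" unfolding rho_def using fin ne by (rule Max_in)
  have all: "\<And>k. k \<in> ?S \<Longrightarrow> k \<le> bnd \<alpha> n \<and> (\<alpha> \<notin> {0, 1/2, 1} \<longrightarrow> k < bnd \<alpha> n)"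
    using ev_le assms by auto
  have le: "rho (A_alpha \<alpha> n) \<le> bnd \<alpha> n" using all[OF mem] by simp
  have eqv: "rho (A_alpha \<alpha> n) = bnd \<alpha> n \<longleftrightarrow> \<alpha> \<in> {0, 1/2, 1}"
  proof
    assume "rho (A_alpha \<alpha> n) = bnd \<alpha> n"
    then show "\<alpha> \<in> {0, 1/2, 1}" using all[OF mem] by auto
  next
    assume "\<alpha> \<in> {0, 1/2, 1}"
    then have "bnd \<alpha> n \<in> ?S" using ev_eq_cases assms by auto
    then have "bnd \<alpha> n \<le> rho (A_alpha \<alpha> n)" unfolding rho_def by (rule Max_ge[OF fin])
    then show "rho (A_alpha \<alpha> n) = bnd \<alpha> n" using le by simp
  qed
  show ?thesis using le eqv unfolding bnd_def by simp
qed

end
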